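(* Under the setting of the following context, if $\mathbf{E}:=[e_k(x_j)]_{j,k=1}^n$ is nonsingular, then $$\mathcal{E}(\mathcal{S}_{\mathcal{X}})-\mathcal{E}(\mathcal{S}_T)\le 2K_\Omega\sqrt{1-\frac{1}{\lambda_{\max}\big(K[\mathcal{X}]^T(\mathbf{E}\mathbf{E}^* )^{-1}\big)}}.$$
   Context: $X$ is a metric space, $K$ a reproducing kernel on $X$ with RKHS $\mathcal{H}_K$ (so $f(x)=(f,K(x,\cdot))_{\mathcal{H}_K}$), $\Omega\subseteq X$ compact with $K$ continuous on $\Omega\times\Omega$, $\mu$ a finite positive Borel measure on $\Omega$, $K_\Omega:=\int_\Omega K(t,t)\,d\mu(t)$, and for a closed subspace $V$ of $\mathcal{H}_K$, $\mathcal{E}(V):=\int_\Omega\operatorname{dist}^2(K(t,\cdot),V)\,d\mu(t)$. $T$ is the positive compact operator on $\mathcal{H}_K$ given by $(Tf)(x)=\int_\Omega f(t)K(t,x)\,d\mu(t)$; $e_1,\dots,e_n$ are orthonormal eigenfunctions of $T$ for its $n$ largest eigenvalues, assumed positive; $\mathcal{S}_T=\operatorname{span}\{e_1,\dots,e_n\}$. $\mathcal{X}=\{x_1,\dots,x_n\}\subseteq X$ with $K[\mathcal{X}]=[K(x_j,x_k)]_{j,k=1}^n$ nonsingular, $\mathcal{S}_{\mathcal{X}}=\operatorname{span}\{K(x_j,\cdot)\}$. With $f_j:=\sum_{k=1}^n\overline{e_k(x_j)}e_k$ and $h_j:=K(x_j,\cdot)-f_j$, the matrix $\mathbf{B}:=[(h_k,h_j)_{\mathcal{H}_K}]_{j,k=1}^n$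 is assumed nonsingular. $\lambda_{\max}$ denotes the largest eigenvalue, $M^T$ the transpose, $M^*$ the conjugate transpose. *)

theory Defs
  imports "HOL-Analysis.Analysis" "Jordan_Normal_Form.Schur_Decomposition"
begin

definition hnorm :: "(('a \<Rightarrow> complex) \<Rightarrow> ('a \<Rightarrow> complex) \<Rightarrow> complex) \<Rightarrow> ('a \<Rightarrow> complex) \<Rightarrow> real" where
  "hnorm ip f = sqrt (Re (ip f f))"

text \<open>(H, ip) is a reproducing kernel Hilbert space of complex-valued functions on the
  type 'a with reproducing kernel K; the inner product is linear in the first argument
  and f x = ip f (K x) where K x denotes the function K(x,.).\<close>
definition is_rkhs ::
  "('a \<Rightarrow> 'a \<Rightarrow> complex) \<Rightarrow> ('a \<Rightarrow> complex) set \<Rightarrow>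
   (('a \<Rightarrow> complex) \<Rightarrow> ('a \<Rightarrow> complex) \<Rightarrow> complex) \<Rightarrow> bool" where
  "is_rkhs K H ip \<longleftrightarrow>
     (\<lambda>_. 0) \<in> H \<and>
     (\<forall>f\<in>H. \<forall>g\<in>H. (\<lambda>x. f x + g x) \<in> H) \<and>
     (\<forall>c. \<forall>f\<in>H. (\<lambda>x. c * f x) \<in> H) \<and>
     (\<forall>f\<in>H. \<forall>g\<in>H. \<forall>h\<in>H. ip (\<lambda>x. f x + g x) h = ip f h + ip g h) \<and>
     (\<forall>c. \<forall>f\<in>H. \<forall>g\<in>H. ip (\<lambda>x. c * f x) g = c * ip f g) \<and>
     (\<forall>f\<in>H. \<forall>g\<in>H. ip g f = cnj (ip f g)) \<and>
     (\<forall>f\<in>H. 0 \<le> Re (ip f f)) \<and>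
     (\<forall>f\<in>H. ip f f = 0 \<longrightarrow> f = (\<lambda>_. 0)) \<and>
     (\<forall>s. (\<forall>n. s n \<in> H) \<and>
          (\<forall>e>0. \<exists>N. \<forall>m\<ge>N. \<forall>n\<ge>N. hnorm ip (s m - s n) < e) \<longrightarrow>
          (\<exists>g\<in>H. (\<lambda>n. hnorm ip (s n - g)) \<longlonglongrightarrow> 0)) \<and>
     (\<forall>x. K x \<in> H) \<and>
     (\<forall>f\<in>H. \<forall>x. f x = ip f (K x))"

definition fspan :: "nat \<Rightarrow> (nat \<Rightarrow> 'a \<Rightarrow> complex) \<Rightarrow> ('a \<Rightarrow> complex) set" where
  "fspan n v = {(\<lambda>y. \<Sum>k<n. c k * v k y) | c. True}"

definition hdist :: "(('a \<Rightarrow> complex) \<Rightarrow> ('a \<Rightarrow> complex) \<Rightarrow> complex) \<Rightarrow> ('a \<Rightarrow> complex) \<Rightarrow> ('a \<Rightarrow> complex) set \<Rightarrow> real" where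
  "hdist ip f V = Inf ((\<lambda>v. hnorm ip (f - v)) ` V)"

definition approx_err :: "'a measure \<Rightarrow> ('a \<Rightarrow> 'a \<Rightarrow> complex) \<Rightarrow>
   (('a \<Rightarrow> complex) \<Rightarrow> ('a \<Rightarrow> complex) \<Rightarrow> complex) \<Rightarrow> ('a \<Rightarrow> complex) set \<Rightarrow> real" where
  "approx_err \<mu> K ip V = (\<integral>t. (hdist ip (K t) V)\<^sup>2 \<partial>\<mu>)"

definition intop :: "'a measure \<Rightarrow> ('a \<Rightarrow> 'a \<Rightarrow> complex) \<Rightarrow> ('a \<Rightarrow> complex) \<Rightarrow> 'a \<Rightarrow> complex" where
  "intop \<mu> K f x = (\<integral>t. f t * K t x \<partial>\<mu>)"

definition lambda_max :: "complex mat \<Rightarrow> real" where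
  "lambda_max A = Max {r::real. eigenvalue A (complex_of_real r)}"

definition mat_inv :: "complex mat \<Rightarrow> complex mat" where
  "mat_inv A = (THE B. B \<in> carrier_mat (dim_row A) (dim_row A) \<and> inverts_mat A B \<and> inverts_mat B A)"

end

theory Submission
  imports Defs
begin

locale rk =
  fixes K :: "'a \<Rightarrow> 'a \<Rightarrow> complex" and H :: "('a \<Rightarrow> complex) set"
    and ip :: "('a \<Rightarrow> complex) \<Rightarrow> ('a \<Rightarrow> complex) \<Rightarrow> complex"
  assumes rkhs: "is_rkhs K H ip"
begin

lemma zero_in: "(\<lambda>_. 0) \<in> H" using rkhs unfolding is_rkhs_def by blast
lemma add_in: "f \<in> H \<Longrightarrow> g \<in> H \<Longrightarrow> (\<lambda>x. f x + g x) \<in> H" using rkhs unfolding is_rkhs_def by blast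
lemma scale_in: "f \<in> H \<Longrightarrow> (\<lambda>x. c * f x) \<in> H" using rkhs unfolding is_rkhs_def by blast
lemma ip_add: "f \<in> H \<Longrightarrow> g \<in> H \<Longrightarrow> h \<in> H \<Longrightarrow> ip (\<lambda>x. f x + g x) h = ip f h + ip g h"
  using rkhs unfolding is_rkhs_def by blast
lemma ip_scale: "f \<in> H \<Longrightarrow> g \<in> H \<Longrightarrow> ip (\<lambda>x. c * f x) g = c * ip f g"
  using rkhs unfolding is_rkhs_def by blast
lemma ip_sym: "f \<in> H \<Longrightarrow> g \<in> H \<Longrightarrow> ip g f = cnj (ip f g)"
  using rkhs unfolding is_rkhs_def by blast
lemma ip_pos: "f \<in> H \<Longrightarrow> 0 \<le> Re (ip f f)"
  using rkhs unfolding is_rkhs_def by blast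
lemma K_in: "K y \<in> H" using rkhs unfolding is_rkhs_def by blast
lemma repr: "f \<in> H \<Longrightarrow> f y = ip f (K y)" using rkhs unfolding is_rkhs_def by blast

definition lin :: "('a \<Rightarrow> complex) \<Rightarrow> complex \<Rightarrow> ('a \<Rightarrow> complex) \<Rightarrow> 'a \<Rightarrow> complex" where
  "lin f a g = (\<lambda>x. f x + a * g x)"

lemma lin_in: "f \<in> H \<Longrightarrow> g \<in> H \<Longrightarrow> lin f a g \<in> H"
  unfolding lin_def by (rule add_in, assumption, rule scale_in)

lemma ip_lin: "f \<in> H \<Longrightarrow> g \<in> H \<Longrightarrow> h \<in> H \<Longrightarrow> ip (lin f a g) h = ip f h + a * ip g h"
  unfolding lin_def by (subst ip_add, assumption, rule scale_in, assumption+) (simp add: ip_scale)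

lemma ip_lin_r: assumes "f \<in> H" "g \<in> H" "h \<in> H" shows "ip h (lin f a g) = ip h f + cnj a * ip h g"
proof -
  have "ip h (lin f a g) = cnj (ip (lin f a g) h)" using assms lin_in ip_sym by blast
  also have "\<dots> = cnj (ip f h) + cnj a * cnj (ip g h)" using assms by (simp add: ip_lin)
  also have "\<dots> = ip h f + cnj a * ip h g" using assms ip_sym by metis
  finally show ?thesis .
qed

lemma minus_lin: "f - g = lin f (-1) g" by (simp add: lin_def fun_eq_iff)

lemma minus_in: "f \<in> H \<Longrightarrow> g \<in> H \<Longrightarrow> f - g \<in> H"
  by (simp add: minus_lin lin_in)

lemma ip_minus: "f \<in> H \<Longrightarrow> g \<in> H \<Longrightarrow> h \<in> H \<Longrightarrow> ip (f - g) h = ip f h - ip g h"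
  by (simp add: minus_lin ip_lin)

lemma ip_minus_r: "f \<in> H \<Longrightarrow> g \<in> H \<Longrightarrow> h \<in> H \<Longrightarrow> ip h (f - g) = ip h f - ip h g"
  by (simp add: minus_lin ip_lin_r)

lemma ip_real: "f \<in> H \<Longrightarrow> ip f f = complex_of_real (Re (ip f f))"
proof -
  assume "f \<in> H"
  hence "ip f f = cnj (ip f f)" using ip_sym by blast
  hence "Im (ip f f) = 0" by (metis cnj.sel(2) complex_eq_iff neg_equal_zero)
  thus ?thesis by (simp add: complex_eq_iff)
qed

lemma sum_Suc_lin: "(\<lambda>y. \<Sum>k<Suc n. c k * v k y) = lin (\<lambda>y. \<Sum>k<n. c k * v k y) (c n) (v n)"
  by (simp add: lin_def)

lemma sum_in: "(\<And>k::nat. k < n \<Longrightarrow> v k \<in> H) \<Longrightarrow> (\<lambda>y. \<Sum>k<n. c k * v k y) \<in> H"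
proof (induction n)
  case 0 thus ?case using zero_in by simp
next
  case (Suc n)
  show ?case unfolding sum_Suc_lin by (rule lin_in) (use Suc in auto)
qed

lemma ip_zero: "g \<in> H \<Longrightarrow> ip (\<lambda>_. 0) g = 0"
  using ip_scale[OF zero_in, of g 0] by simp

lemma ip_sum: "(\<And>k::nat. k < n \<Longrightarrow> v k \<in> H) \<Longrightarrow> g \<in> H \<Longrightarrow>
   ip (\<lambda>y. \<Sum>k<n. c k * v k y) g = (\<Sum>k<n. c k * ip (v k) g)"
proof (induction n)
  case 0 thus ?case using ip_zero by simp
next
  case (Suc n)
  have h1: "(\<lambda>y. \<Sum>k<n. c k * v k y) \<in> H" by (rule sum_in) (use Suc in auto)
  have h2: "v n \<in> H" using Suc by auto
  show ?case unfolding sum_Suc_lin ip_lin[OF h1 h2 Suc(3)] using Suc by simp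
qed

lemma ip_sum_r: assumes "(\<And>k::nat. k < n \<Longrightarrow> v k \<in> H)" "g \<in> H" shows
   "ip g (\<lambda>y. \<Sum>k<n. c k * v k y) = (\<Sum>k<n. cnj (c k) * ip g (v k))"
proof -
  have "ip g (\<lambda>y. \<Sum>k<n. c k * v k y) = cnj (ip (\<lambda>y. \<Sum>k<n. c k * v k y) g)"
    using assms sum_in ip_sym by blast
  also have "\<dots> = (\<Sum>k<n. cnj (c k) * cnj (ip (v k) g))" using assms by (simp add: ip_sum)
  also have "\<dots> = (\<Sum>k<n. cnj (c k) * ip g (v k))" by (intro sum.cong refl) (metis assms ip_sym lessThan_iff)
  finally show ?thesis .
qed

lemma ip_lin_lin: assumes "f \<in> H" "g \<in> H"
  shows "ip (lin f a g) (lin f a g) = ip f f + cnj a * ip f g + a * ip g f + a * cnj a * ip g g"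
  using assms by (simp add: ip_lin ip_lin_r lin_in algebra_simps)

lemma cs: assumes f: "f \<in> H" and g: "g \<in> H"
  shows "(cmod (ip f g))\<^sup>2 \<le> Re (ip f f) * Re (ip g g)"
proof (cases "Re (ip g g) = 0")
  case True
  hence gg: "ip g g = 0" using ip_real[OF g] by (metis of_real_0)
  have "0 \<le> Re (ip (lin f (- (of_real t * ip f g)) g) (lin f (- (of_real t * ip f g)) g))" for t
    using ip_pos f g lin_in by blast
  hence "0 \<le> Re (ip f f) - 2 * t * ((Re (ip f g))\<^sup>2 + (Im (ip f g))\<^sup>2)" for t
    unfolding ip_lin_lin[OF f g] using gg ip_sym[OF f g]
    by (simp add: power2_eq_square algebra_simps)
  hence "0 \<le> Re (ip f f) - 2 * t * (cmod (ip f g))\<^sup>2" for t by (simp add: cmod_power2)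
  from this[of "(Re (ip f f) + 1) / (2 * (cmod (ip f g))\<^sup>2)"]
  have "(cmod (ip f g))\<^sup>2 = 0" using ip_pos[OF f]
    by (cases "(cmod (ip f g))\<^sup>2 = 0") (auto simp: field_simps)
  thus ?thesis using True by simp
next
  case False
  hence pos: "Re (ip g g) > 0" using ip_pos[OF g] by simp
  define a where "a = ip f g / ip g g"
  have gg: "ip g g = of_real (Re (ip g g))" using ip_real[OF g] .
  have "0 \<le> Re (ip (lin f (- a) g) (lin f (- a) g))"
    using ip_pos f g lin_in by blast
  also have "ip (lin f (- a) g) (lin f (- a) g) = ip f f - of_real ((cmod (ip f g))\<^sup>2 / Re (ip g g))"
  proof -
    define r where "r = Re (ip g g)"
    define p where "p = ip f g"
    have r0: "(of_real r :: complex) \<noteq> 0" using pos r_def by simp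
    have "ip (lin f (- a) g) (lin f (- a) g) = ip f f - cnj a * p - a * cnj p + a * cnj a * of_real r"
      unfolding ip_lin_lin[OF f g] ip_sym[OF f g] p_def r_def using gg by simp
    also have "\<dots> = ip f f - p * cnj p / of_real r"
      unfolding a_def p_def[symmetric] using r0 gg r_def by (simp add: field_simps)
    also have "\<dots> = ip f f - of_real ((cmod p)\<^sup>2 / r)"
      by (simp only: complex_norm_square[symmetric] of_real_divide)
    finally show ?thesis by (simp add: p_def r_def)
  qed
  finally show ?thesis using pos by (simp add: field_simps)
qed

end

lemma smult_mat_vec_aux: "A \<in> carrier_mat n n \<Longrightarrow> v \<in> carrier_vec n \<Longrightarrow>
  (c \<cdot>\<^sub>m A) *\<^sub>v v = (c::complex) \<cdot>\<^sub>v (A *\<^sub>v v)"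
  by (intro eq_vecI) (auto simp: scalar_prod_def sum_distrib_left mult.assoc)

lemma mat_solve:
  fixes A :: "nat \<Rightarrow> nat \<Rightarrow> complex"
  assumes "det (mat n n (\<lambda>(i,j). A i j)) \<noteq> 0"
  shows "\<exists>c. \<forall>i<n. (\<Sum>j<n. A i j * c j) = b i"
proof -
  define M where "M = mat n n (\<lambda>(i,j). A i j)"
  have M: "M \<in> carrier_mat n n" by (simp add: M_def)
  define v where "v = vec n b"
  define c where "c = inverse (det M) \<cdot>\<^sub>v (adj_mat M *\<^sub>v v)"
  have v: "v \<in> carrier_vec n" by (simp add: v_def)
  have adj: "adj_mat M \<in> carrier_mat n n" using adj_mat(1)[OF M] .
  have "M *\<^sub>v c = inverse (det M) \<cdot>\<^sub>v (M *\<^sub>v (adj_mat M *\<^sub>v v))"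
    unfolding c_def using M adj v by (simp add: mult_mat_vec)
  also have "M *\<^sub>v (adj_mat M *\<^sub>v v) = (M * adj_mat M) *\<^sub>v v"
    using M adj v by (simp add: assoc_mult_mat_vec)
  also have "\<dots> = det M \<cdot>\<^sub>v v" using adj_mat(2)[OF M] v smult_mat_vec_aux[of "1\<^sub>m n" n v "det M"] by simp
  finally have Mc: "M *\<^sub>v c = v" using assms v unfolding M_def[symmetric]
    by (simp add: smult_smult_assoc)
  have cdim: "c \<in> carrier_vec n" using adj v by (simp add: c_def)
  show ?thesis
  proof (intro exI allI impI)
    fix i assume i: "i < n"
    have "(M *\<^sub>v c) $ i = b i" using Mc i by (simp add: v_def)
    moreover have "(M *\<^sub>v c) $ i = (\<Sum>j<n. A i j * c $ j)"
      using i M cdim by (simp add: M_def scalar_prod_def row_def lessThan_atLeast0)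
    ultimately show "(\<Sum>j<n. A i j * c $ j) = b i" by simp
  qed
qed

lemma mat_kernel:
  fixes A :: "nat \<Rightarrow> nat \<Rightarrow> complex"
  assumes "det (mat n n (\<lambda>(i,j). A i j)) \<noteq> 0"
    and "\<forall>i<n. (\<Sum>j<n. A i j * c j) = 0"
  shows "\<forall>j<n. c j = 0"
proof -
  define M where "M = mat n n (\<lambda>(i,j). A i j)"
  have M: "M \<in> carrier_mat n n" by (simp add: M_def)
  define v where "v = vec n c"
  have "M *\<^sub>v v = 0\<^sub>v n"
    using assms(2) by (auto simp: M_def v_def scalar_prod_def row_def lessThan_atLeast0)
  hence "v = 0\<^sub>v n" using det_0_iff_vec_prod_zero_field[OF M] assms(1) M_def
    by (metis v_def vec_carrier)
  thus ?thesis by (auto simp: v_def) (metis index_vec index_zero_vec(1))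
qed

context rk begin

definition nn where "nn f = Re (ip f f)"

lemma nn_pos: "f \<in> H \<Longrightarrow> 0 \<le> nn f" by (simp add: nn_def ip_pos)

lemma hnorm_nn: "hnorm ip f = sqrt (nn f)" by (simp add: hnorm_def nn_def)

lemma pyth: assumes "f \<in> H" "g \<in> H" "ip (f - g) g = 0"
  shows "nn f = nn (f - g) + nn g"
proof -
  have fg: "f - g \<in> H" using assms minus_in by blast
  have e: "f = lin (f - g) 1 g" by (simp add: lin_def fun_eq_iff)
  have z: "ip g (f - g) = 0" using ip_sym[OF fg assms(2)] assms(3) by simp
  have "ip f f = ip (f - g) (f - g) + ip g g"
    by (subst (1 2) e) (simp add: ip_lin_lin[OF fg assms(2)] assms(3) z)
  thus ?thesis by (simp add: nn_def)
qed

lemma triangle: assumes "f \<in> H" "g \<in> H"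
  shows "sqrt (nn (lin f 1 g)) \<le> sqrt (nn f) + sqrt (nn g)"
proof -
  have "nn (lin f 1 g) = nn f + 2 * Re (ip f g) + nn g"
    unfolding nn_def ip_lin_lin[OF assms] using ip_sym[OF assms] by simp
  also have "Re (ip f g) \<le> cmod (ip f g)" by (rule complex_Re_le_cmod)
  also have "cmod (ip f g) \<le> sqrt (nn f) * sqrt (nn g)"
    using cs[OF assms] nn_pos[OF assms(1)] nn_pos[OF assms(2)] unfolding nn_def
    by (metis norm_ge_zero real_le_rsqrt real_sqrt_mult)
  finally have "nn (lin f 1 g) \<le> (sqrt (nn f) + sqrt (nn g))\<^sup>2"
    using nn_pos[OF assms(1)] nn_pos[OF assms(2)] by (simp add: power2_eq_square algebra_simps)
  thus ?thesis using nn_pos[OF assms(1)] nn_pos[OF assms(2)] real_le_lsqrt by fastforce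
qed

lemma hdist_le: assumes "v \<in> V" "V \<subseteq> H" "f \<in> H" shows "hdist ip f V \<le> hnorm ip (f - v)"
  unfolding hdist_def by (rule cInf_lower) (use assms in \<open>auto intro!: bdd_belowI[of _ 0] simp: hnorm_def ip_pos minus_in subsetD\<close>)

lemma hdist_ge: assumes "V \<noteq> {}" "\<And>v. v \<in> V \<Longrightarrow> b \<le> hnorm ip (f - v)" shows "b \<le> hdist ip f V"
  unfolding hdist_def by (rule cInf_greatest) (use assms in auto)

lemma hdist_nonneg: assumes "V \<noteq> {}" "V \<subseteq> H" "f \<in> H" shows "0 \<le> hdist ip f V"
  by (rule hdist_ge[OF assms(1)]) (use assms in \<open>auto simp: hnorm_def ip_pos minus_in subsetD\<close>)

lemma hdist_lip: assumes "V \<noteq> {}" "V \<subseteq> H" "f \<in> H" "g \<in> H"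
  shows "hdist ip f V \<le> hnorm ip (f - g) + hdist ip g V"
proof -
  have "hdist ip f V - hnorm ip (f - g) \<le> hdist ip g V"
  proof (rule hdist_ge[OF assms(1)])
    fix v assume v: "v \<in> V"
    have vH: "v \<in> H" using v assms by auto
    have "f - v = lin (f - g) 1 (g - v)" by (simp add: lin_def fun_eq_iff)
    hence "hnorm ip (f - v) \<le> hnorm ip (f - g) + hnorm ip (g - v)"
      using triangle[of "f - g" "g - v"] minus_in assms vH by (simp add: hnorm_nn)
    moreover have "hdist ip f V \<le> hnorm ip (f - v)" by (rule hdist_le[OF v]) (use assms in auto)
    ultimately show "hdist ip f V - hnorm ip (f - g) \<le> hnorm ip (g - v)" by simp
  qed
  thus ?thesis by simp
qed

end

locale setting = rk +
  fixes n :: nat and e :: "nat \<Rightarrow> 'a \<Rightarrow> complex" and x :: "nat \<Rightarrow> 'a"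
  assumes n_pos: "0 < n"
    and e_in: "\<And>k. k < n \<Longrightarrow> e k \<in> H"
    and e_orth: "\<And>j k. j < n \<Longrightarrow> k < n \<Longrightarrow> ip (e j) (e k) = (if j = k then 1 else 0)"
    and Gdet: "det (mat n n (\<lambda>(j, k). K (x j) (x k))) \<noteq> 0"
    and Edet: "det (mat n n (\<lambda>(j, k). e k (x j))) \<noteq> 0"
begin

definition pt where "pt f = (\<lambda>y. \<Sum>l<n. ip f (e l) * e l y)"
definition wc where "wc c = (\<lambda>y. \<Sum>j<n. c j * K (x j) y)"
definition Pq where "Pq f = (\<Sum>l<n. (cmod (ip f (e l)))\<^sup>2)"

lemma pt_in: "pt f \<in> H" unfolding pt_def by (rule sum_in) (simp add: e_in)
lemma wc_in: "wc c \<in> H" unfolding wc_def by (rule sum_in) (simp add: K_in)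
lemma Kx_in: "K (x j) \<in> H" by (rule K_in)

lemma ip_pt_e: "l < n \<Longrightarrow> ip (pt f) (e l) = ip f (e l)"
  unfolding pt_def by (subst ip_sum) (auto simp: e_in e_orth if_distrib cong: if_cong)

lemma ip_f_comb: assumes "f \<in> H" shows "ip f (\<lambda>y. \<Sum>l<n. a l * e l y) = (\<Sum>l<n. cnj (a l) * ip f (e l))"
  by (rule ip_sum_r) (simp_all add: e_in assms)

lemma perp_pt: assumes "f \<in> H" shows "ip (f - pt f) (\<lambda>y. \<Sum>l<n. a l * e l y) = 0"
proof -
  have "ip (f - pt f) (\<lambda>y. \<Sum>l<n. a l * e l y) = (\<Sum>l<n. cnj (a l) * ip (f - pt f) (e l))"
    by (rule ip_f_comb) (simp add: minus_in pt_in assms)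
  also have "\<dots> = 0" by (simp add: ip_minus assms pt_in e_in ip_pt_e)
  finally show ?thesis .
qed

lemma perp_pt_e: assumes "f \<in> H" "l < n" shows "ip (f - pt f) (e l) = 0"
  using assms by (simp add: ip_minus pt_in e_in ip_pt_e)

lemma nn_pt: "nn (pt f) = Pq f"
proof -
  have "ip (pt f) (pt f) = (\<Sum>l<n. cnj (ip f (e l)) * ip (pt f) (e l))"
    unfolding pt_def[of f] by (rule ip_f_comb) (rule pt_in[unfolded pt_def])
  also have "\<dots> = (\<Sum>l<n. of_real ((cmod (ip f (e l)))\<^sup>2))"
    by (rule sum.cong) (auto simp: ip_pt_e mult.commute, metis complex_norm_square of_real_power)
  finally show ?thesis by (simp add: nn_def Pq_def)
qed

lemma nn_split: assumes "f \<in> H" shows "nn f = nn (f - pt f) + Pq f"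
proof -
  have "ip (f - pt f) (pt f) = 0" using perp_pt[OF assms, of "\<lambda>l. ip f (e l)"] by (simp add: pt_def)
  from pyth[OF assms pt_in this] show ?thesis by (simp add: nn_pt)
qed

lemma ST_bound: assumes "f \<in> H" "v \<in> fspan n e" shows "nn f - Pq f \<le> nn (f - v)"
proof -
  obtain c where v: "v = (\<lambda>y. \<Sum>l<n. c l * e l y)" using assms(2) by (auto simp: fspan_def)
  have vH: "v \<in> H" unfolding v by (rule sum_in) (simp add: e_in)
  have d: "pt f - v = (\<lambda>y. \<Sum>l<n. (ip f (e l) - c l) * e l y)"
    by (simp add: pt_def v fun_eq_iff sum_subtractf algebra_simps)
  have dd: "(f - v) - (pt f - v) = f - pt f" by (simp add: fun_eq_iff)
  have "nn (f - v) = nn ((f - v) - (pt f - v)) + nn (pt f - v)"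
    by (rule pyth) (simp_all add: minus_in assms vH pt_in dd, simp add: d perp_pt assms)
  hence "nn (f - v) = nn (f - pt f) + nn (pt f - v)" by (simp add: dd)
  moreover have "0 \<le> nn (pt f - v)" by (rule nn_pos) (simp add: minus_in pt_in vH)
  ultimately show ?thesis using nn_split[OF assms(1)] by simp
qed

lemma hdist_ST: assumes "f \<in> H" shows "nn f - Pq f \<le> (hdist ip f (fspan n e))\<^sup>2"
proof -
  have ne: "fspan n e \<noteq> {}" by (auto simp: fspan_def)
  have "sqrt (nn f - Pq f) \<le> hdist ip f (fspan n e)"
    by (rule hdist_ge[OF ne]) (simp add: hnorm_nn ST_bound assms)
  moreover have "0 \<le> nn f - Pq f" using nn_split[OF assms] nn_pos minus_in assms pt_in by fastforce
  ultimately show ?thesis by (metis real_sqrt_le_iff real_sqrt_pow2 sqrt_le_D)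
qed

end


context setting begin

lemma ip_K_K: "ip (K a) (K b) = K a b" using repr[OF K_in, of a b] by simp

lemma ip_K_e: "l < n \<Longrightarrow> ip (K a) (e l) = cnj (e l a)"
  by (metis K_in e_in ip_sym repr)

lemma ip_wc: "g \<in> H \<Longrightarrow> ip (wc c) g = (\<Sum>j<n. c j * ip (K (x j)) g)"
  unfolding wc_def by (rule ip_sum) (simp_all add: K_in)

lemma ip_wc_r: "f \<in> H \<Longrightarrow> ip f (wc c) = (\<Sum>j<n. cnj (c j) * ip f (K (x j)))"
  unfolding wc_def by (rule ip_sum_r) (simp_all add: K_in)

lemma ip_wc_e: "l < n \<Longrightarrow> ip (wc c) (e l) = (\<Sum>j<n. c j * cnj (e l (x j)))"
  by (simp add: ip_wc e_in ip_K_e)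

lemma ip_wc_wc: "ip (wc c) (wc c) = (\<Sum>j<n. c j * (\<Sum>k<n. cnj (c k) * K (x j) (x k)))"
  apply (subst ip_wc[OF wc_in])
  apply (rule sum.cong[OF refl])
  apply (subst ip_wc_r[OF K_in])
  by (simp add: ip_K_K)

lemma wc_SX: "wc c \<in> fspan n (\<lambda>j. K (x j))" by (auto simp: fspan_def wc_def)

lemma SX_sub: "fspan n (\<lambda>j. K (x j)) \<subseteq> H" by (auto simp: fspan_def intro!: sum_in K_in)
lemma ST_sub: "fspan n e \<subseteq> H" by (auto simp: fspan_def intro!: sum_in e_in)
lemma SX_ne: "fspan n (\<lambda>j. K (x j)) \<noteq> {}" by (auto simp: fspan_def)
lemma ST_ne: "fspan n e \<noteq> {}" by (auto simp: fspan_def)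

lemma Gtdet: "det (mat n n (\<lambda>(i, j). K (x j) (x i))) \<noteq> 0"
proof -
  have "mat n n (\<lambda>(i, j). K (x j) (x i)) = transpose_mat (mat n n (\<lambda>(j, k). K (x j) (x k)))"
    by (auto simp: transpose_mat_def)
  thus ?thesis using Gdet det_transpose[of "mat n n (\<lambda>(j, k). K (x j) (x k))" n] by simp
qed

lemma Etdet: "det (mat n n (\<lambda>(l, j). e l (x j))) \<noteq> 0"
proof -
  have "mat n n (\<lambda>(l, j). e l (x j)) = transpose_mat (mat n n (\<lambda>(j, k). e k (x j)))"
    by (auto simp: transpose_mat_def)
  thus ?thesis using Edet det_transpose[of "mat n n (\<lambda>(j, k). e k (x j))" n] by simp
qed

lemma proj_SX: assumes "f \<in> H" shows "\<exists>c. \<forall>d. ip (f - wc c) (wc d) = 0"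
proof -
  obtain c where c: "\<forall>i<n. (\<Sum>j<n. K (x j) (x i) * c j) = f (x i)"
    using mat_solve[OF Gtdet, of "\<lambda>i. f (x i)"] by auto
  have "ip (f - wc c) (K (x i)) = 0" if "i < n" for i
  proof -
    have "ip (f - wc c) (K (x i)) = f (x i) - (\<Sum>j<n. c j * K (x j) (x i))"
      using assms repr[OF assms, of "x i"] by (simp add: ip_minus wc_in K_in ip_wc ip_K_K)
    thus ?thesis using c that by (simp add: mult.commute)
  qed
  hence "ip (f - wc c) (wc d) = 0" for d
    by (simp add: ip_wc_r minus_in assms wc_in)
  thus ?thesis by blast
qed

lemma hdist_SX: assumes "f \<in> H" shows "\<exists>c. (hdist ip f (fspan n (\<lambda>j. K (x j))))\<^sup>2 \<le> nn f - nn (wc c)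
    \<and> (\<forall>d. ip (f - wc c) (wc d) = 0)"
proof -
  obtain c where c: "\<forall>d. ip (f - wc c) (wc d) = 0" using proj_SX[OF assms] by blast
  have sp: "nn f = nn (f - wc c) + nn (wc c)" by (rule pyth) (simp_all add: assms wc_in c)
  have "hdist ip f (fspan n (\<lambda>j. K (x j))) \<le> hnorm ip (f - wc c)"
    by (rule hdist_le[OF wc_SX SX_sub assms])
  moreover have "0 \<le> hdist ip f (fspan n (\<lambda>j. K (x j)))" by (rule hdist_nonneg[OF SX_ne SX_sub assms])
  ultimately have "(hdist ip f (fspan n (\<lambda>j. K (x j))))\<^sup>2 \<le> nn (f - wc c)"
    unfolding hnorm_nn using nn_pos[OF minus_in[OF assms wc_in]]
    by (metis power_mono real_sqrt_pow2)
  thus ?thesis using sp c by (intro exI[of _ c]) auto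
qed

lemma surj_e: "\<exists>c. \<forall>l<n. ip (wc c) (e l) = a l"
proof -
  obtain d where d: "\<forall>l<n. (\<Sum>j<n. e l (x j) * d j) = cnj (a l)"
    using mat_solve[OF Etdet, of "\<lambda>l. cnj (a l)"] by auto
  have "ip (wc (\<lambda>j. cnj (d j))) (e l) = a l" if "l < n" for l
  proof -
    have "ip (wc (\<lambda>j. cnj (d j))) (e l) = cnj (\<Sum>j<n. e l (x j) * d j)"
      using that by (simp add: ip_wc_e mult.commute)
    thus ?thesis using d that by simp
  qed
  thus ?thesis by blast
qed

lemma wc_zero: assumes "\<forall>l<n. ip (wc c) (e l) = 0" shows "\<forall>j<n. c j = 0"
proof -
  have "\<forall>l<n. (\<Sum>j<n. e l (x j) * cnj (c j)) = 0"
  proof (intro allI impI)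
    fix l assume l: "l < n"
    have "(\<Sum>j<n. e l (x j) * cnj (c j)) = cnj (ip (wc c) (e l))"
      using l by (simp add: ip_wc_e mult.commute)
    thus "(\<Sum>j<n. e l (x j) * cnj (c j)) = 0" using assms l by simp
  qed
  from mat_kernel[OF Etdet this] show ?thesis by simp
qed

end


context setting begin

lemma pt_lin: assumes "f \<in> H" "g \<in> H" shows "pt (lin f a g) = lin (pt f) a (pt g)"
proof -
  have "pt (lin f a g) = (\<lambda>y. \<Sum>l<n. (ip f (e l) + a * ip g (e l)) * e l y)"
    unfolding pt_def by (intro ext sum.cong refl) (simp add: ip_lin assms e_in)
  also have "\<dots> = lin (pt f) a (pt g)"
    by (simp add: pt_def lin_def fun_eq_iff sum.distrib sum_distrib_left algebra_simps)
  finally show ?thesis .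
qed

lemma wc_lin: "wc (\<lambda>j. c j + a * d j) = lin (wc c) a (wc d)"
  by (simp add: wc_def lin_def fun_eq_iff sum.distrib sum_distrib_left algebra_simps)

lemma ip_pt_l: assumes "g \<in> H" shows "ip (pt f) g = (\<Sum>l<n. ip f (e l) * cnj (ip g (e l)))"
  unfolding pt_def by (subst ip_sum) (auto simp: e_in assms intro!: sum.cong ip_sym)

lemma Re_ip_pt: assumes "h \<in> H" shows "Re (ip (pt h) h) = Pq h"
  unfolding ip_pt_l[OF assms] Pq_def
  by (simp add: complex_norm_square[symmetric] of_real_power[symmetric] del: of_real_power)

definition Psi where "Psi r f g = of_real r * ip (pt f) g - ip f g"

lemma Psi_sym: assumes "f \<in> H" "g \<in> H" shows "Psi r g f = cnj (Psi r f g)"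
proof -
  have "ip (pt g) f = cnj (ip (pt f) g)"
    unfolding ip_pt_l[OF assms(1)] ip_pt_l[OF assms(2)] by (simp add: mult.commute)
  thus ?thesis unfolding Psi_def using ip_sym[OF assms] by simp
qed

lemma Psi_lin: assumes f: "f \<in> H" and g: "g \<in> H"
  shows "Psi r (lin f a g) (lin f a g) = Psi r f f + cnj a * Psi r f g + a * Psi r g f + a * cnj a * Psi r g g"
proof -
  have l: "lin f a g \<in> H" using f g lin_in by blast
  show ?thesis unfolding Psi_def pt_lin[OF f g]
    using f g pt_in[of f] pt_in[of g]
    by (simp add: ip_lin ip_lin_r lin_in algebra_simps)
qed

lemma Re_Psi: assumes "h \<in> H" shows "Re (Psi r h h) = r * Pq h - nn h"
  unfolding Psi_def nn_def using Re_ip_pt[OF assms] by simp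

lemma eigen_rel:
  assumes A: "\<forall>c. nn (wc c) \<le> r * Pq (wc c)"
    and B: "nn (wc c0) = r * Pq (wc c0)"
  shows "\<forall>i<n. wc c0 (x i) = of_real r * pt (wc c0) (x i)"
proof -
  have w0: "wc c0 \<in> H" by (rule wc_in)
  have key: "Psi r (wc c0) (wc d) = 0" for d
  proof -
    define X where "X = Psi r (wc c0) (wc d)"
    define q where "q = Re (Psi r (wc d) (wc d))"
    have q0: "0 \<le> q" unfolding q_def Re_Psi[OF wc_in] using A by simp
    have ineq: "0 \<le> - 2 * t * (cmod X)\<^sup>2 + t\<^sup>2 * (cmod X)\<^sup>2 * q" for t :: real
    proof -
      define a where "a = - (of_real t * X)"
      have "0 \<le> Re (Psi r (wc (\<lambda>j. c0 j + a * d j)) (wc (\<lambda>j. c0 j + a * d j)))"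
        unfolding Re_Psi[OF wc_in] using A by simp
      also have "\<dots> = Re (Psi r (wc c0) (wc c0)) + Re (cnj a * X + a * cnj X) + Re (a * cnj a) * q"
        unfolding wc_lin Psi_lin[OF wc_in wc_in] Psi_sym[OF wc_in wc_in, of r d c0] X_def[symmetric] q_def
        by (simp add: complex_mult_cnj)
      also have "Re (Psi r (wc c0) (wc c0)) = 0" unfolding Re_Psi[OF wc_in] using B by simp
      also have "Re (cnj a * X + a * cnj X) = - 2 * t * (cmod X)\<^sup>2"
      proof -
        have "cnj a * X + a * cnj X = - of_real (2 * t) * (X * cnj X)" unfolding a_def by (simp add: algebra_simps)
        thus ?thesis by (simp only: complex_norm_square[symmetric] of_real_mult[symmetric] of_real_minus[symmetric] Re_complex_of_real)
      qed
      also have "Re (a * cnj a) = t\<^sup>2 * (cmod X)\<^sup>2"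
      proof -
        have "a * cnj a = of_real (t\<^sup>2) * (X * cnj X)" unfolding a_def by (simp add: algebra_simps power2_eq_square)
        thus ?thesis by (simp only: complex_norm_square[symmetric] of_real_mult[symmetric] Re_complex_of_real)
      qed
      finally show ?thesis by simp
    qed
    define t where "t = 1 / (q + 1)"
    have t0: "0 < t" using q0 by (simp add: t_def)
    have tq: "t * q < 1" using q0 by (simp add: t_def field_simps)
    have "0 \<le> t * (cmod X)\<^sup>2 * (t * q - 2)" using ineq[of t] by (simp add: algebra_simps power2_eq_square)
    moreover have "t * q - 2 < 0" using tq by simp
    ultimately have "t * (cmod X)\<^sup>2 \<le> 0"
      by (metis linorder_not_le mult_pos_neg order_le_less_trans order_less_irrefl)
    hence "cmod X = 0" using t0 by (simp add: mult_le_0_iff)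
    thus ?thesis by (simp add: X_def)
  qed
  show ?thesis
  proof (intro allI impI)
    fix i assume i: "i < n"
    have wK: "wc (\<lambda>j. if j = i then 1 else 0) = K (x i)"
    proof
      fix y
      have "(\<Sum>j<n. (if j = i then 1 else 0) * K (x j) y) = (\<Sum>j<n. if j = i then K (x j) y else 0)"
        by (rule sum.cong) auto
      thus "wc (\<lambda>j. if j = i then 1 else 0) y = K (x i) y" using i by (simp add: wc_def)
    qed
    have "Psi r (wc c0) (K (x i)) = 0" using key[of "\<lambda>j. if j = i then 1 else 0"] wK by simp
    moreover have "ip (pt (wc c0)) (K (x i)) = pt (wc c0) (x i)" using repr[OF pt_in] by simp
    moreover have "ip (wc c0) (K (x i)) = wc c0 (x i)" using repr[OF w0] by simp
    ultimately show "wc c0 (x i) = of_real r * pt (wc c0) (x i)" unfolding Psi_def by simp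
  qed
qed

end


lemma cont_coord [continuous_intros]: "continuous_on S (\<lambda>c::nat \<Rightarrow> complex. c j)"
  by (rule continuous_on_subset[OF continuous_on_product_coordinates]) simp

lemma sphere_compact:
  "compact {c :: nat \<Rightarrow> complex. (\<forall>j. n \<le> j \<longrightarrow> c j = 0) \<and> (\<Sum>j<n. (cmod (c j))\<^sup>2) = 1}"
proof -
  define B where "B = (\<lambda>j::nat. if j < n then cball (0::complex) 1 else {0})"
  have "compactin (product_topology (\<lambda>_. euclidean) UNIV) (PiE UNIV B)"
    by (subst compactin_PiE) (auto simp: B_def)
  hence c1: "compact (PiE UNIV B)" by (simp add: euclidean_product_topology)
  have c2: "closed {c :: nat \<Rightarrow> complex. (\<Sum>j<n. (cmod (c j))\<^sup>2) = 1}"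
    by (rule closed_Collect_eq) (auto intro!: continuous_intros)
  have eq: "{c :: nat \<Rightarrow> complex. (\<forall>j. n \<le> j \<longrightarrow> c j = 0) \<and> (\<Sum>j<n. (cmod (c j))\<^sup>2) = 1}
      = PiE UNIV B \<inter> {c. (\<Sum>j<n. (cmod (c j))\<^sup>2) = 1}"
  proof (rule equalityI; rule subsetI)
    fix c assume c: "c \<in> {c :: nat \<Rightarrow> complex. (\<forall>j. n \<le> j \<longrightarrow> c j = 0) \<and> (\<Sum>j<n. (cmod (c j))\<^sup>2) = 1}"
    have "cmod (c j) \<le> 1" if "j < n" for j
    proof -
      have "(cmod (c j))\<^sup>2 \<le> (\<Sum>j<n. (cmod (c j))\<^sup>2)"
        by (rule member_le_sum) (use that in auto)
      hence "(cmod (c j))\<^sup>2 \<le> 1\<^sup>2" using c by simp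
      thus ?thesis by (metis norm_ge_zero one_power2 power2_le_imp_le zero_le_one)
    qed
    thus "c \<in> PiE UNIV B \<inter> {c. (\<Sum>j<n. (cmod (c j))\<^sup>2) = 1}" using c[unfolded mem_Collect_eq]
      by (auto simp: B_def PiE_iff not_less)
  next
    fix c assume "c \<in> PiE UNIV B \<inter> {c. (\<Sum>j<n. (cmod (c j))\<^sup>2) = 1}"
    thus "c \<in> {c :: nat \<Rightarrow> complex. (\<forall>j. n \<le> j \<longrightarrow> c j = 0) \<and> (\<Sum>j<n. (cmod (c j))\<^sup>2) = 1}"
      by (auto simp: B_def PiE_iff split: if_splits) (metis not_less)
  qed
  show ?thesis unfolding eq using c1 c2 by blast
qed


lemma rayleigh_max:
  fixes F P :: "(nat \<Rightarrow> complex) \<Rightarrow> real" and n :: nat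
  assumes n: "0 < n"
    and contF: "continuous_on UNIV F" and contP: "continuous_on UNIV P"
    and Ppos: "\<And>c. (\<exists>j<n. c j \<noteq> 0) \<Longrightarrow> P c > 0"
    and scF: "\<And>c t. F (\<lambda>j. of_real t * c j) = t\<^sup>2 * F c"
    and scP: "\<And>c t. P (\<lambda>j. of_real t * c j) = t\<^sup>2 * P c"
    and depF: "\<And>c. F c = F (\<lambda>j. if j < n then c j else 0)"
    and depP: "\<And>c. P c = P (\<lambda>j. if j < n then c j else 0)"
  shows "\<exists>c0 r. (\<exists>j<n. c0 j \<noteq> 0) \<and> F c0 = r * P c0 \<and> (\<forall>c. F c \<le> r * P c)"
proof -
  define S where "S = {c :: nat \<Rightarrow> complex. (\<forall>j. n \<le> j \<longrightarrow> c j = 0) \<and> (\<Sum>j<n. (cmod (c j))\<^sup>2) = 1}"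
  have cS: "compact S" unfolding S_def by (rule sphere_compact)
  have Snz: "\<exists>j<n. c j \<noteq> 0" if "c \<in> S" for c
  proof (rule ccontr)
    assume "\<not> ?thesis"
    hence "(\<Sum>j<n. (cmod (c j))\<^sup>2) = 0" by simp
    thus False using that by (simp add: S_def)
  qed
  have neS: "S \<noteq> {}"
  proof -
    have "(\<Sum>j<n. (cmod (if j = 0 then 1 else (0::complex)))\<^sup>2) = (\<Sum>j<n. if j = 0 then 1 else 0)"
      by (rule sum.cong) auto
    hence "(\<lambda>j. if j = 0 then 1 else (0::complex)) \<in> S" using n by (auto simp: S_def)
    thus ?thesis by blast
  qed
  have contR: "continuous_on S (\<lambda>c. F c / P c)"
    by (intro continuous_on_divide continuous_on_subset[OF contF] continuous_on_subset[OF contP])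
       (auto dest!: Snz Ppos)
  obtain c0 where c0: "c0 \<in> S" and mx: "\<forall>c\<in>S. F c / P c \<le> F c0 / P c0"
    using continuous_attains_sup[OF cS neS contR] by blast
  define r where "r = F c0 / P c0"
  have P0: "P c0 > 0" using Ppos Snz c0 by blast
  have "F c \<le> r * P c" for c
  proof (cases "\<exists>j<n. c j \<noteq> 0")
    case False
    hence "(\<lambda>j. if j < n then c j else 0) = (\<lambda>j. of_real 0 * c j)" by auto
    hence "F c = 0" "P c = 0" using depF[of c] depP[of c] scF[of 0 c] scP[of 0 c] by simp_all
    thus ?thesis by simp
  next
    case True
    define c' where "c' = (\<lambda>j. if j < n then c j else 0)"
    define s where "s = (\<Sum>j<n. (cmod (c j))\<^sup>2)"
    have s0: "s > 0"
    proof -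
      obtain j where j: "j < n" "c j \<noteq> 0" using True by blast
      have "0 < (cmod (c j))\<^sup>2" using j by simp
      also have "\<dots> \<le> s" unfolding s_def by (rule member_le_sum) (use j in auto)
      finally show ?thesis .
    qed
    define t where "t = 1 / sqrt s"
    define c'' where "c'' = (\<lambda>j. of_real t * c' j)"
    have "c'' \<in> S"
    proof -
      have "(\<Sum>j<n. (cmod (c'' j))\<^sup>2) = (\<Sum>j<n. t\<^sup>2 * (cmod (c j))\<^sup>2)"
        by (rule sum.cong) (auto simp: c''_def c'_def norm_mult norm_divide power_mult_distrib power_divide t_def)
      also have "\<dots> = t\<^sup>2 * s" by (simp add: s_def sum_distrib_left)
      also have "\<dots> = 1" using s0 by (simp add: t_def power_divide)
      finally show ?thesis by (auto simp: S_def c''_def c'_def)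
    qed
    hence "F c'' / P c'' \<le> r" using mx r_def by blast
    moreover have "F c'' / P c'' = F c / P c"
    proof -
      have t0: "t\<^sup>2 \<noteq> 0" using s0 by (simp add: t_def)
      show ?thesis unfolding c''_def scF scP using t0 depF[of c] depP[of c] c'_def by simp
    qed
    moreover have "P c > 0" using Ppos True by blast
    ultimately show ?thesis by (simp add: divide_le_eq)
  qed
  moreover have "F c0 = r * P c0" using P0 by (simp add: r_def)
  ultimately show ?thesis using Snz[OF c0] by blast
qed

lemma adj_carrier: "A \<in> carrier_mat n n \<Longrightarrow> mat_adjoint A \<in> carrier_mat n n"
  unfolding mat_adjoint_def by (rule carrier_matI) simp_all

lemma adj_index: "A \<in> carrier_mat n n \<Longrightarrow> i < n \<Longrightarrow> j < n \<Longrightarrow> mat_adjoint A $$ (i,j) = cnj (A $$ (j,i))"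
  by (simp add: mat_adjoint_def mat_of_rows_def)

lemma mat_inv_prop: assumes A: "(A::complex mat) \<in> carrier_mat n n" and d: "det A \<noteq> 0"
  shows "mat_inv A \<in> carrier_mat n n \<and> mat_inv A * A = 1\<^sub>m n \<and> A * mat_inv A = 1\<^sub>m n"
proof -
  have "A \<in> Units (ring_mat TYPE(complex) n ())" by (rule det_non_zero_imp_unit[OF A d])
  then obtain B where B: "B \<in> carrier_mat n n" "B * A = 1\<^sub>m n" "A * B = 1\<^sub>m n"
    by (auto simp: Units_def ring_mat_def)
  have "mat_inv A = B" unfolding mat_inv_def
  proof (rule the_equality)
    show "B \<in> carrier_mat (dim_row A) (dim_row A) \<and> inverts_mat A B \<and> inverts_mat B A"
      using A B by (auto simp: inverts_mat_def)
  next
    fix C assume C: "C \<in> carrier_mat (dim_row A) (dim_row A) \<and> inverts_mat A C \<and> inverts_mat C A"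
    hence C': "C \<in> carrier_mat n n" "A * C = 1\<^sub>m n" using A by (auto simp: inverts_mat_def)
    have "C = (B * A) * C" using C' by (simp add: B(2))
    also have "\<dots> = B * (A * C)" by (rule assoc_mult_mat[OF B(1) A C'(1)])
    also have "\<dots> = B" using C' B by simp
    finally show "C = B" .
  qed
  thus ?thesis using B by simp
qed

lemma eig_finite: assumes "(M::complex mat) \<in> carrier_mat n n"
  shows "finite {r::real. eigenvalue M (complex_of_real r)}"
proof -
  have "monic (char_poly M)" using degree_monic_char_poly[OF assms] by simp
  hence nz: "char_poly M \<noteq> 0" by auto
  have "{r::real. eigenvalue M (complex_of_real r)} = complex_of_real -` {k. poly (char_poly M) k = 0}"
    using eigenvalue_root_char_poly[OF assms] by auto
  moreover have "finite (complex_of_real -` {k. poly (char_poly M) k = 0})"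
    by (rule finite_vimageI[OF poly_roots_finite[OF nz]]) (simp add: inj_of_real)
  ultimately show ?thesis by simp
qed


context setting begin

lemma F_formula: "nn (wc c) = Re (\<Sum>j<n. c j * (\<Sum>k<n. cnj (c k) * K (x j) (x k)))"
  by (simp add: nn_def ip_wc_wc)

lemma P_formula: "Pq (wc c) = (\<Sum>l<n. (cmod (\<Sum>j<n. c j * cnj (e l (x j))))\<^sup>2)"
  unfolding Pq_def by (rule sum.cong) (simp_all add: ip_wc_e)

lemma Pq_nonneg: "0 \<le> Pq f" by (simp add: Pq_def sum_nonneg)

lemma Q_ray: "\<exists>c0 r. (\<exists>j<n. c0 j \<noteq> 0) \<and> nn (wc c0) = r * Pq (wc c0) \<and> (\<forall>c. nn (wc c) \<le> r * Pq (wc c))"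
proof (rule rayleigh_max[OF n_pos])
  show "continuous_on UNIV (\<lambda>c. nn (wc c))" unfolding F_formula by (intro continuous_intros)
  show "continuous_on UNIV (\<lambda>c. Pq (wc c))" unfolding P_formula by (intro continuous_intros)
  show "0 < Pq (wc c)" if "\<exists>j<n. c j \<noteq> 0" for c
  proof (rule ccontr)
    assume "\<not> 0 < Pq (wc c)"
    hence "Pq (wc c) = 0" using Pq_nonneg[of "wc c"] by simp
    hence "\<forall>l<n. ip (wc c) (e l) = 0" unfolding Pq_def
      by (subst (asm) sum_nonneg_eq_0_iff) auto
    thus False using wc_zero that by blast
  qed
  show "nn (wc (\<lambda>j. complex_of_real t * c j)) = t\<^sup>2 * nn (wc c)" for c t
  proof -
    have "(\<Sum>j<n. of_real t * c j * (\<Sum>k<n. cnj (of_real t * c k) * K (x j) (x k)))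
        = of_real (t\<^sup>2) * (\<Sum>j<n. c j * (\<Sum>k<n. cnj (c k) * K (x j) (x k)))"
      by (simp add: sum_distrib_left power2_eq_square algebra_simps)
    thus ?thesis unfolding F_formula by simp
  qed
  show "Pq (wc (\<lambda>j. complex_of_real t * c j)) = t\<^sup>2 * Pq (wc c)" for c t
  proof -
    have "(cmod (\<Sum>j<n. of_real t * c j * cnj (e l (x j))))\<^sup>2 = t\<^sup>2 * (cmod (\<Sum>j<n. c j * cnj (e l (x j))))\<^sup>2" for l
    proof -
      have "(\<Sum>j<n. of_real t * c j * cnj (e l (x j))) = of_real t * (\<Sum>j<n. c j * cnj (e l (x j)))"
        by (simp add: sum_distrib_left mult.assoc)
      thus ?thesis by (simp add: norm_mult power_mult_distrib)
    qed
    thus ?thesis unfolding P_formula by (simp add: sum_distrib_left)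
  qed
  show "nn (wc c) = nn (wc (\<lambda>j. if j < n then c j else 0))" for c
    unfolding F_formula by (intro arg_cong[where f=Re] sum.cong refl) auto
  show "Pq (wc c) = Pq (wc (\<lambda>j. if j < n then c j else 0))" for c
    unfolding P_formula by (intro sum.cong refl arg_cong[where f="\<lambda>u. (cmod u)\<^sup>2"]) auto
qed

definition Gm where "Gm = mat n n (\<lambda>(j, k). K (x j) (x k))"
definition Em where "Em = mat n n (\<lambda>(j, k). e k (x j))"
definition Pm where "Pm = Em * mat_adjoint Em"
definition Mm where "Mm = transpose_mat Gm * mat_inv Pm"

lemma Em_c: "Em \<in> carrier_mat n n" by (simp add: Em_def)
lemma Gm_c: "Gm \<in> carrier_mat n n" by (simp add: Gm_def)
lemma Pm_c: "Pm \<in> carrier_mat n n" using adj_carrier[OF Em_c] Em_c by (simp add: Pm_def)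

lemma adjEm_mult: "v \<in> carrier_vec n \<Longrightarrow> l < n \<Longrightarrow> (mat_adjoint Em *\<^sub>v v) $ l = (\<Sum>j<n. v $ j * cnj (e l (x j)))"
proof -
  assume v: "v \<in> carrier_vec n" and l: "l < n"
  have "(mat_adjoint Em *\<^sub>v v) $ l = (\<Sum>j<n. mat_adjoint Em $$ (l, j) * v $ j)"
    using adj_carrier[OF Em_c] l v by (simp add: scalar_prod_def row_def lessThan_atLeast0 mult.commute)
  also have "\<dots> = (\<Sum>j<n. v $ j * cnj (e l (x j)))"
    apply (rule sum.cong[OF refl])
    apply (subst adj_index[OF Em_c l])
     apply simp
    apply (simp add: Em_def l)
    done
  finally show ?thesis .
qed

lemma Pm_det: "det Pm \<noteq> 0"
proof
  assume "det Pm = 0"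
  then obtain v where v: "v \<in> carrier_vec n" "v \<noteq> 0\<^sub>v n" "Pm *\<^sub>v v = 0\<^sub>v n"
    using det_0_iff_vec_prod_zero_field[OF Pm_c] by blast
  have "Em *\<^sub>v (mat_adjoint Em *\<^sub>v v) = 0\<^sub>v n"
    using v adj_carrier[OF Em_c] Em_c by (simp add: Pm_def)
  hence u: "mat_adjoint Em *\<^sub>v v = 0\<^sub>v n"
    using det_0_iff_vec_prod_zero_field[OF Em_c] Edet adj_carrier[OF Em_c] unfolding Em_def
    by (metis Em_def mult_mat_vec_carrier v(1))
  have "\<forall>l<n. (\<Sum>j<n. e l (x j) * cnj (v $ j)) = 0"
  proof (intro allI impI)
    fix l assume l: "l < n"
    have "(mat_adjoint Em *\<^sub>v v) $ l = 0" using u l by simp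
    hence "(\<Sum>j<n. v $ j * cnj (e l (x j))) = 0" using adjEm_mult[OF v(1) l] by simp
    hence "cnj (\<Sum>j<n. v $ j * cnj (e l (x j))) = 0" by simp
    thus "(\<Sum>j<n. e l (x j) * cnj (v $ j)) = 0" by (simp add: mult.commute)
  qed
  from mat_kernel[OF Etdet this] have "\<forall>j<n. v $ j = 0" by simp
  hence "v = 0\<^sub>v n" using v(1) by (intro eq_vecI) auto
  thus False using v(2) by simp
qed

lemma Mm_c: "Mm \<in> carrier_mat n n"
  using mat_inv_prop[OF Pm_c Pm_det] Gm_c by (simp add: Mm_def)

lemma Q_eig: "\<exists>r. eigenvalue Mm (of_real r) \<and> (\<forall>c. nn (wc c) \<le> r * Pq (wc c))"
proof -
  obtain c0 r where nz: "\<exists>j<n. c0 j \<noteq> 0" and eq: "nn (wc c0) = r * Pq (wc c0)"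
    and le: "\<forall>c. nn (wc c) \<le> r * Pq (wc c)" using Q_ray by blast
  have rel: "\<forall>i<n. wc c0 (x i) = of_real r * pt (wc c0) (x i)" by (rule eigen_rel[OF le eq])
  define cv where "cv = vec n c0"
  have cv: "cv \<in> carrier_vec n" by (simp add: cv_def)
  define y where "y = Pm *\<^sub>v cv"
  have y: "y \<in> carrier_vec n" using Pm_c cv by (simp add: y_def)
  have Gt: "transpose_mat Gm *\<^sub>v cv = of_real r \<cdot>\<^sub>v y"
  proof (rule eq_vecI)
    show "dim_vec (transpose_mat Gm *\<^sub>v cv) = dim_vec (of_real r \<cdot>\<^sub>v y)" using y Gm_c by simp
    fix i assume "i < dim_vec (of_real r \<cdot>\<^sub>v y)"
    hence i: "i < n" using y by simp
    have "(transpose_mat Gm *\<^sub>v cv) $ i = wc c0 (x i)"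
      using i by (simp add: Gm_def cv_def wc_def scalar_prod_def lessThan_atLeast0 mult.commute)
    also have "\<dots> = of_real r * pt (wc c0) (x i)" using rel i by simp
    also have "pt (wc c0) (x i) = y $ i"
    proof -
      have "y = Em *\<^sub>v (mat_adjoint Em *\<^sub>v cv)" unfolding y_def Pm_def
        using Em_c adj_carrier[OF Em_c] cv by simp
      hence "y $ i = (\<Sum>l<n. e l (x i) * (mat_adjoint Em *\<^sub>v cv) $ l)"
        using i adj_carrier[OF Em_c] by (simp add: Em_def scalar_prod_def lessThan_atLeast0)
      also have "\<dots> = (\<Sum>l<n. e l (x i) * (\<Sum>j<n. c0 j * cnj (e l (x j))))"
        apply (rule sum.cong[OF refl])
        apply (subst adjEm_mult[OF cv])
         apply simp
        apply (simp add: cv_def)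
        done
      also have "\<dots> = pt (wc c0) (x i)"
        unfolding pt_def by (rule sum.cong) (auto simp: ip_wc_e mult.commute)
      finally show ?thesis by simp
    qed
    finally show "(transpose_mat Gm *\<^sub>v cv) $ i = (of_real r \<cdot>\<^sub>v y) $ i" using i y by simp
  qed
  have inv: "mat_inv Pm \<in> carrier_mat n n \<and> mat_inv Pm * Pm = 1\<^sub>m n"
    using mat_inv_prop[OF Pm_c Pm_det] by simp
  have "Mm *\<^sub>v y = transpose_mat Gm *\<^sub>v (mat_inv Pm *\<^sub>v (Pm *\<^sub>v cv))"
    unfolding Mm_def y_def
    by (rule assoc_mult_mat_vec[of _ n n _ n]) (use inv Gm_c Pm_c cv in auto)
  also have "mat_inv Pm *\<^sub>v (Pm *\<^sub>v cv) = cv"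
  proof -
    have "mat_inv Pm *\<^sub>v (Pm *\<^sub>v cv) = (mat_inv Pm * Pm) *\<^sub>v cv"
      by (rule assoc_mult_mat_vec[of _ n n _ n, symmetric]) (use inv Pm_c cv in auto)
    thus ?thesis using inv cv by simp
  qed
  finally have My: "Mm *\<^sub>v y = of_real r \<cdot>\<^sub>v y" using Gt by simp
  have "y \<noteq> 0\<^sub>v n"
  proof
    assume "y = 0\<^sub>v n"
    hence "transpose_mat Gm *\<^sub>v cv = 0\<^sub>v n" using Gt by (auto intro!: eq_vecI)
    hence "\<forall>i<n. (\<Sum>j<n. K (x j) (x i) * c0 j) = 0"
    proof (intro allI impI)
      fix i assume i: "i < n" and z: "transpose_mat Gm *\<^sub>v cv = 0\<^sub>v n"
      have "(transpose_mat Gm *\<^sub>v cv) $ i = 0" using z i by simp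
      thus "(\<Sum>j<n. K (x j) (x i) * c0 j) = 0"
        using i by (simp add: Gm_def cv_def scalar_prod_def lessThan_atLeast0)
    qed
    thus False using mat_kernel[OF Gtdet] nz by blast
  qed
  hence "eigenvector Mm y (of_real r)" unfolding eigenvector_def using y My Mm_c by simp
  thus ?thesis using le unfolding eigenvalue_def by blast
qed

end


context setting begin

definition lam where "lam = lambda_max Mm"

lemma Q: "nn (wc c) \<le> lam * Pq (wc c)"
proof -
  obtain r where r: "eigenvalue Mm (of_real r)" and le: "\<forall>c. nn (wc c) \<le> r * Pq (wc c)"
    using Q_eig by blast
  have "r \<le> lam" unfolding lam_def lambda_max_def
    by (rule Max_ge[OF eig_finite[OF Mm_c]]) (simp add: r)
  hence "r * Pq (wc c) \<le> lam * Pq (wc c)" using Pq_nonneg by (simp add: mult_right_mono)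
  thus ?thesis using le by (meson order_trans)
qed

lemma Pq_le_nn: "f \<in> H \<Longrightarrow> Pq f \<le> nn f"
proof -
  assume f: "f \<in> H"
  have "0 \<le> nn (f - pt f)" by (rule nn_pos[OF minus_in[OF f pt_in]])
  thus ?thesis using nn_split[OF f] by linarith
qed

lemma lam_ge1: "1 \<le> lam"
proof -
  obtain c where c: "\<forall>l<n. ip (wc c) (e l) = (if l = 0 then 1 else 0)" using surj_e[of "\<lambda>l. if l = 0 then 1 else 0"] by blast
  have "Pq (wc c) = (\<Sum>l<n. if l = 0 then 1 else 0)"
    unfolding Pq_def
  proof (rule sum.cong[OF refl])
    fix l assume "l \<in> {..<n}"
    hence "ip (wc c) (e l) = (if l = 0 then 1 else 0)" using c by simp
    thus "(cmod (ip (wc c) (e l)))\<^sup>2 = (if l = 0 then 1 else 0)" by simp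
  qed
  also have "\<dots> = (1::real)" using n_pos by (simp add: sum.delta)
  finally have P1: "Pq (wc c) = 1" .
  have "1 \<le> nn (wc c)" using Pq_le_nn[OF wc_in, of c] P1 by simp
  also have "\<dots> \<le> lam * 1" using Q[of c] P1 by simp
  finally show ?thesis by simp
qed

lemma perp_bound: assumes z: "z \<in> H" and perp: "\<forall>d. ip z (wc d) = 0"
  shows "Pq z \<le> (1 - 1 / lam) * nn z"
proof -
  define u where "u = pt z"
  obtain c where c: "\<forall>l<n. ip (wc c) (e l) = ip z (e l)" using surj_e[of "\<lambda>l. ip z (e l)"] by blast
  define w where "w = wc c"
  have uH: "u \<in> H" by (simp add: u_def pt_in)
  have wH: "w \<in> H" by (simp add: w_def wc_in)
  have ptw: "pt w = u" unfolding u_def pt_def w_def by (intro ext sum.cong) (auto simp: c)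
  have Pqw: "Pq w = Pq z" unfolding Pq_def w_def by (rule sum.cong) (auto simp: c)
  define a where "a = Pq z"
  have a0: "0 \<le> a" by (simp add: a_def Pq_nonneg)
  have nnu: "nn u = a" by (simp add: u_def a_def nn_pt)
  have splw: "nn w = nn (w - u) + a" using nn_split[OF wH] ptw Pqw a_def by simp
  have splz: "nn z = nn (z - u) + a" using nn_split[OF z] u_def a_def by simp
  have Qw: "nn w \<le> lam * a" using Q[of c] Pqw a_def w_def by simp
  have wu: "nn (w - u) \<le> (lam - 1) * a" using splw Qw by (simp add: algebra_simps)
  have zw: "ip z w = 0" using perp w_def by simp
  have zuu: "ip (z - u) u = 0" using perp_pt[OF z, of "\<lambda>l. ip z (e l)"] by (simp add: u_def pt_def)
  have wuu: "ip (w - u) u = 0" using perp_pt[OF wH, of "\<lambda>l. ip w (e l)"] ptw by (simp add: pt_def)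
  hence uwu: "ip u (w - u) = 0" using ip_sym[OF minus_in[OF wH uH] uH] by simp
  have zu: "ip z u = ip u u" using zuu by (simp add: ip_minus z uH)
  have zwu: "ip z (w - u) = - ip u u" by (simp add: ip_minus_r wH uH z zw zu)
  have key: "ip (z - u) (w - u) = - ip u u"
    by (simp add: ip_minus z uH minus_in wH zwu uwu)
  have "a = Re (ip u u)" using nnu by (simp add: nn_def)
  also have "\<dots> \<le> cmod (ip (z - u) (w - u))" using key by (simp add: abs_le_D1 abs_Re_le_cmod)
  finally have acm: "a \<le> cmod (ip (z - u) (w - u))" .
  have "a\<^sup>2 \<le> (cmod (ip (z - u) (w - u)))\<^sup>2" using acm a0 by (simp add: power_mono)
  also have "\<dots> \<le> nn (z - u) * nn (w - u)" using cs[OF minus_in[OF z uH] minus_in[OF wH uH]] by (simp add: nn_def)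
  also have "\<dots> \<le> (nn z - a) * ((lam - 1) * a)"
    using splz wu nn_pos[OF minus_in[OF z uH]] by (simp add: mult_left_mono)
  finally have ineq: "a\<^sup>2 \<le> (nn z - a) * ((lam - 1) * a)" .
  have l1: "1 \<le> lam" by (rule lam_ge1)
  have nz0: "0 \<le> nn z" by (rule nn_pos[OF z])
  show ?thesis
  proof (cases "a = 0")
    case True thus ?thesis using l1 nz0 by (simp add: a_def)
  next
    case False
    hence ap: "0 < a" using a0 by simp
    have "a * a \<le> ((nn z - a) * (lam - 1)) * a" using ineq by (simp add: power2_eq_square algebra_simps)
    hence "a \<le> (nn z - a) * (lam - 1)" using ap by simp
    hence "lam * a \<le> (lam - 1) * nn z" by (simp add: algebra_simps)
    hence "a \<le> ((lam - 1) * nn z) / lam" using l1 by (simp add: le_divide_eq mult.commute)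
    also have "\<dots> = (1 - 1 / lam) * nn z" using l1 by (simp add: field_simps)
    finally show ?thesis by (simp add: a_def)
  qed
qed

lemma pointwise: assumes k: "k \<in> H"
  shows "(hdist ip k (fspan n (\<lambda>j. K (x j))))\<^sup>2 - (hdist ip k (fspan n e))\<^sup>2
         \<le> 2 * sqrt (1 - 1 / lam) * nn k"
proof -
  obtain c where hx: "(hdist ip k (fspan n (\<lambda>j. K (x j))))\<^sup>2 \<le> nn k - nn (wc c)"
    and perp: "\<forall>d. ip (k - wc c) (wc d) = 0" using hdist_SX[OF k] by blast
  define v where "v = wc c"
  define z where "z = k - v"
  have vH: "v \<in> H" by (simp add: v_def wc_in)
  have zH: "z \<in> H" by (simp add: z_def minus_in k vH)
  have hs: "nn k - Pq k \<le> (hdist ip k (fspan n e))\<^sup>2" by (rule hdist_ST[OF k])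
  have spl: "nn k = nn z + nn v" using pyth[OF k vH] perp v_def z_def by simp
  define s where "s = sqrt (1 - 1 / lam)"
  have l1: "1 \<le> lam" by (rule lam_ge1)
  have s0: "0 \<le> s" and s1: "s \<le> 1" and ss: "s\<^sup>2 = 1 - 1 / lam"
    using l1 by (auto simp: s_def)
  have kk: "k = lin v 1 z" by (simp add: lin_def z_def fun_eq_iff)
  have ptk: "pt k = lin (pt v) 1 (pt z)" using pt_lin[OF vH zH, of 1] kk by simp
  have "Pq k = nn (lin (pt v) 1 (pt z))" by (metis nn_pt ptk)
  hence t1: "sqrt (Pq k) \<le> sqrt (Pq v) + sqrt (Pq z)"
    using triangle[OF pt_in pt_in, of v z] by (simp add: nn_pt)
  have t2: "sqrt (Pq v) \<le> sqrt (nn v)" using Pq_le_nn[OF vH] by simp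
  have t3: "sqrt (Pq z) \<le> s * sqrt (nn z)"
  proof -
    have "Pq z \<le> s\<^sup>2 * nn z" using perp_bound[OF zH] perp ss by (simp add: z_def v_def)
    hence "sqrt (Pq z) \<le> sqrt (s\<^sup>2 * nn z)" by simp
    thus ?thesis using s0 by (simp add: real_sqrt_mult)
  qed
  have tr: "sqrt (Pq k) \<le> sqrt (nn v) + s * sqrt (nn z)" using t1 t2 t3 by linarith
  define A where "A = sqrt (nn v)"
  define B where "B = sqrt (nn z)"
  have A0: "0 \<le> A" and B0: "0 \<le> B" using nn_pos[OF vH] nn_pos[OF zH] by (simp_all add: A_def B_def)
  have AA: "A\<^sup>2 = nn v" and BB: "B\<^sup>2 = nn z" using nn_pos[OF vH] nn_pos[OF zH] by (simp_all add: A_def B_def)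
  have "Pq k = (sqrt (Pq k))\<^sup>2" using Pq_nonneg by simp
  also have "\<dots> \<le> (A + s * B)\<^sup>2"
    by (rule power_mono) (use tr Pq_nonneg[of k] in \<open>simp_all add: A_def B_def\<close>)
  also have "\<dots> \<le> A\<^sup>2 + 2 * s * (A\<^sup>2 + B\<^sup>2)"
  proof -
    have "2 * A * B \<le> A\<^sup>2 + B\<^sup>2" by (simp add: sum_squares_bound)
    hence "s * (2 * A * B) \<le> s * (A\<^sup>2 + B\<^sup>2)" using s0 by (rule mult_left_mono)
    moreover have "s\<^sup>2 * B\<^sup>2 \<le> s * (A\<^sup>2 + B\<^sup>2)"
    proof -
      have "s\<^sup>2 * B\<^sup>2 \<le> s * B\<^sup>2" using s0 s1 by (simp add: power2_eq_square mult_right_mono mult_left_le_one_le)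
      also have "\<dots> \<le> s * (A\<^sup>2 + B\<^sup>2)" using s0 by (simp add: mult_left_mono)
      finally show ?thesis .
    qed
    ultimately show ?thesis by (simp add: power2_eq_square algebra_simps)
  qed
  finally have "Pq k \<le> nn v + 2 * s * nn k" using AA BB spl by (simp add: add.commute)
  thus ?thesis using hx hs v_def s_def by simp
qed

end


lemma int_cont:
  fixes f :: "'a::metric_space \<Rightarrow> real"
  assumes fm: "finite_measure \<mu>" and ms: "sets \<mu> = sets (restrict_space borel \<Omega>)"
    and cp: "compact \<Omega>" and cf: "continuous_on \<Omega> f"
  shows "integrable \<mu> f"
proof -
  have sp: "space \<mu> = \<Omega>" using sets_eq_imp_space_eq[OF ms] by (simp add: space_restrict_space)
  have meas: "f \<in> borel_measurable \<mu>"
    by (subst measurable_cong_sets[OF ms refl]) (rule borel_measurable_continuous_on_restrict[OF cf])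
  have "bounded (f ` \<Omega>)" using compact_continuous_image[OF cf cp] compact_imp_bounded by blast
  then obtain B where B: "\<forall>t\<in>\<Omega>. norm (f t) \<le> B" by (auto simp: bounded_iff)
  show ?thesis
    by (rule finite_measure.integrable_const_bound[OF fm, of f B]) (use B sp meas in \<open>auto intro!: AE_I2\<close>)
qed

lemma K_comp_cont:
  fixes K :: "'a::metric_space \<Rightarrow> 'a \<Rightarrow> complex"
  assumes Kc: "continuous_on (\<Omega> \<times> \<Omega>) (\<lambda>(s, t). K s t)"
    and a: "continuous_on \<Omega> a" and b: "continuous_on \<Omega> b" and ab: "\<forall>s\<in>\<Omega>. a s \<in> \<Omega> \<and> b s \<in> \<Omega>"
  shows "continuous_on \<Omega> (\<lambda>s. K (a s) (b s))"
proof -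
  have "continuous_on \<Omega> (\<lambda>s. (\<lambda>(s, t). K s t) (a s, b s))"
    by (rule continuous_on_compose2[OF Kc]) (use a b ab in \<open>auto intro!: continuous_intros\<close>)
  thus ?thesis by simp
qed

lemma (in rk) ipKK: "ip (K a) (K b) = K a b" using repr[OF K_in, of a b] by simp

lemma (in rk) nn_KK: "nn (K t - K s) = Re (K t t - K t s - K s t + K s s)"
  by (simp add: nn_def ip_minus ip_minus_r minus_in K_in ipKK)
  
lemma (in rk) nn_K: "nn (K t) = Re (K t t)" by (simp add: nn_def ipKK)

lemma hdist_cont:
  fixes K :: "'a::metric_space \<Rightarrow> 'a \<Rightarrow> complex"
  assumes rk: "rk K H ip" and Kc: "continuous_on (\<Omega> \<times> \<Omega>) (\<lambda>(s, t). K s t)"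
    and V: "V \<noteq> {}" "V \<subseteq> H"
  shows "continuous_on \<Omega> (\<lambda>t. hdist ip (K t) V)"
proof -
  interpret rk K H ip by fact
  show ?thesis unfolding continuous_on_iff
  proof (intro ballI allI impI)
    fix t \<epsilon> assume t: "t \<in> \<Omega>" and e: "(0::real) < \<epsilon>"
    define \<phi> where "\<phi> s = Re (K s s - K s t - K t s + K t t)" for s
    have c\<phi>: "continuous_on \<Omega> \<phi>" unfolding \<phi>_def
      using t by (intro continuous_intros K_comp_cont[OF Kc]) auto
    have c\<psi>: "continuous_on \<Omega> (\<lambda>s. sqrt (\<phi> s))" by (intro continuous_intros c\<phi>)
    have \<phi>t: "\<phi> t = 0" by (simp add: \<phi>_def)
    obtain d where d: "d > 0" "\<forall>s\<in>\<Omega>. dist s t < d \<longrightarrow> dist (sqrt (\<phi> s)) (sqrt (\<phi> t)) < \<epsilon>"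
      using c\<psi>[unfolded continuous_on_iff] t e by blast
    show "\<exists>d>0. \<forall>s\<in>\<Omega>. dist s t < d \<longrightarrow> dist (hdist ip (K s) V) (hdist ip (K t) V) < \<epsilon>"
    proof (intro exI[of _ d] conjI ballI impI)
      show "0 < d" by fact
      fix s assume s: "s \<in> \<Omega>" "dist s t < d"
      have hn1: "hnorm ip (K s - K t) = sqrt (\<phi> s)" by (simp add: hnorm_nn nn_KK \<phi>_def)
      have hn2: "hnorm ip (K t - K s) = sqrt (\<phi> s)" by (simp add: hnorm_nn nn_KK \<phi>_def algebra_simps)
      have l1: "hdist ip (K s) V \<le> sqrt (\<phi> s) + hdist ip (K t) V"
        using hdist_lip[OF V K_in K_in, of s t] hn1 by simp
      have l2: "hdist ip (K t) V \<le> sqrt (\<phi> s) + hdist ip (K s) V"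
        using hdist_lip[OF V K_in K_in, of t s] hn2 by simp
      have "\<bar>sqrt (\<phi> s)\<bar> < \<epsilon>" using d(2) s \<phi>t by (simp add: dist_real_def)
      hence "sqrt (\<phi> s) < \<epsilon>" by linarith
      thus "dist (hdist ip (K s) V) (hdist ip (K t) V) < \<epsilon>" using l1 l2 by (simp add: dist_real_def abs_le_iff)
    qed
  qed
qed

theorem theorem4p3:
  fixes K :: "'a::metric_space \<Rightarrow> 'a \<Rightarrow> complex"
    and H :: "('a \<Rightarrow> complex) set"
    and ip :: "('a \<Rightarrow> complex) \<Rightarrow> ('a \<Rightarrow> complex) \<Rightarrow> complex"
    and \<Omega> :: "'a set" and \<mu> :: "'a measure"
    and n :: nat and e :: "nat \<Rightarrow> 'a \<Rightarrow> complex" and lam :: "nat \<Rightarrow> real"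
    and x :: "nat \<Rightarrow> 'a"
  assumes rkhs: "is_rkhs K H ip"
    and cpt: "compact \<Omega>"
    and Kcont: "continuous_on (\<Omega> \<times> \<Omega>) (\<lambda>(s, t). K s t)"
    and mu_sets: "sets \<mu> = sets (restrict_space borel \<Omega>)"
    and mu_fin: "finite_measure \<mu>"
    and n_pos: "0 < n"
    and e_in: "\<forall>k<n. e k \<in> H"
    and e_orth: "\<forall>j<n. \<forall>k<n. ip (e j) (e k) = (if j = k then 1 else 0)"
    and e_eig: "\<forall>k<n. \<forall>y. intop \<mu> K (e k) y = complex_of_real (lam k) * e k y"
    and lam_pos: "\<forall>k<n. 0 < lam k"
    and lam_largest: "\<forall>f\<in>H. \<forall>c::real. f \<noteq> (\<lambda>_. 0) \<and> (\<forall>y. intop \<mu> K f y = complex_of_real c * f y)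
                        \<and> (\<forall>k<n. ip f (e k) = 0) \<longrightarrow> (\<forall>k<n. c \<le> lam k)"
    and KX_nonsing: "det (mat n n (\<lambda>(j, k). K (x j) (x k))) \<noteq> 0"
    and B_nonsing: "det (mat n n (\<lambda>(j, k).
           let h = (\<lambda>i. \<lambda>y. K (x i) y - (\<Sum>l<n. cnj (e l (x i)) * e l y)) in ip (h k) (h j))) \<noteq> 0"
    and E_nonsing: "det (mat n n (\<lambda>(j, k). e k (x j))) \<noteq> 0"
  shows "approx_err \<mu> K ip (fspan n (\<lambda>j. K (x j))) - approx_err \<mu> K ip (fspan n e)
         \<le> 2 * (\<integral>t. Re (K t t) \<partial>\<mu>) *
            sqrt (1 - 1 / lambda_max (transpose_mat (mat n n (\<lambda>(j, k). K (x j) (x k)))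
                   * mat_inv (mat n n (\<lambda>(j, k). e k (x j)) * mat_adjoint (mat n n (\<lambda>(j, k). e k (x j))))))"
proof -
  interpret rk K H ip using rkhs by unfold_locales
  interpret S: setting K H ip n e x
    using n_pos e_in e_orth KX_nonsing E_nonsing by unfold_locales auto
  have lam_eq: "lambda_max (transpose_mat (mat n n (\<lambda>(j, k). K (x j) (x k)))
                   * mat_inv (mat n n (\<lambda>(j, k). e k (x j)) * mat_adjoint (mat n n (\<lambda>(j, k). e k (x j))))) = S.lam"
    by (simp add: S.lam_def S.Mm_def S.Gm_def S.Pm_def S.Em_def)
  define s where "s = sqrt (1 - 1 / S.lam)"
  define f1 where "f1 t = (hdist ip (K t) (fspan n (\<lambda>j. K (x j))))\<^sup>2" for t
  define f2 where "f2 t = (hdist ip (K t) (fspan n e))\<^sup>2" for t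
  have pw: "f1 t - f2 t \<le> 2 * s * Re (K t t)" for t
    using S.pointwise[OF K_in, of t] by (simp add: f1_def f2_def s_def nn_K)
  have rk: "rk K H ip" by unfold_locales
  have c1: "continuous_on \<Omega> f1" unfolding f1_def
    by (intro continuous_intros hdist_cont[OF rk Kcont S.SX_ne S.SX_sub])
  have c2: "continuous_on \<Omega> f2" unfolding f2_def
    by (intro continuous_intros hdist_cont[OF rk Kcont S.ST_ne S.ST_sub])
  have c3: "continuous_on \<Omega> (\<lambda>t. Re (K t t))"
    by (intro continuous_intros K_comp_cont[OF Kcont]) auto
  have i1: "integrable \<mu> f1" by (rule int_cont[OF mu_fin mu_sets cpt c1])
  have i2: "integrable \<mu> f2" by (rule int_cont[OF mu_fin mu_sets cpt c2])
  have i3: "integrable \<mu> (\<lambda>t. Re (K t t))" by (rule int_cont[OF mu_fin mu_sets cpt c3])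
  have "approx_err \<mu> K ip (fspan n (\<lambda>j. K (x j))) - approx_err \<mu> K ip (fspan n e)
        = (\<integral>t. f1 t - f2 t \<partial>\<mu>)"
    unfolding approx_err_def f1_def[symmetric] f2_def[symmetric] using Bochner_Integration.integral_diff[OF i1 i2] by simp
  also have "\<dots> \<le> (\<integral>t. 2 * s * Re (K t t) \<partial>\<mu>)"
    by (rule Bochner_Integration.integral_mono) (use i1 i2 i3 pw in auto)
  also have "\<dots> = 2 * (\<integral>t. Re (K t t) \<partial>\<mu>) * s" by simp
  finally show ?thesis unfolding lam_eq s_def .
qed

end
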